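(* Let $\mathcal{H}=\bigotimes_{i=1}^m \mathcal{H}_i$ be a finite-dimensional multipartite Hilbert space of total dimension $D$, and let $\{\psi_j : j=1,\ldots,n\}$ be an unextendible product basis of $\mathcal{H}$ (with each $\psi_j$ normalized). Then the state $$\bar\rho=\frac{1}{D-n}\Big(\mathbf{1}-\sum_{j=1}^n |\psi_j\rangle\langle\psi_j|\Big)$$ is bound entangled: it is entangled (not separable), and no pure entanglement can be distilled from it by local operations and classical communication (in particular, for every bipartition of the $m$ parties into two groups, $\bar\rho$ has positive partial transpose).
   Context: A product state in $\mathcal{H}$ is a vector $\phi_1\otimes\cdots\otimes\phi_m$ with nonzero $\phi_i\in\mathcal{H}_i$. An (incomplete orthogonal) product basis (PB) is a set $S$ of pairwise orthogonal product states spanning a proper subspace $\mathcal{H}_S$ of $\mathcal{H}$. An unextendible product basis (UPB) is a PB such that the orthogonal complement $\mathcal{H}_S^\perp$ contains no product state. A mixed state is separable if it is a convex combination of projectors onto product states, and entangled otherwise. A state is bound entangled if it is entangled but no pure entangled states can be distilled from (many copies of) it by local operations and classical communication. The partial transpose of a bipartite density matrix on $\mathcal{H}_A\otimes\mathcal{H}_B$ is the transpose applied to the $B$ factor only (in a fixed basis); a state has positive partial transpose (PPT) if its partial transpose is positive semidefinite, and PPT bipartite states have no distillable entanglement. *)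

theory Defs
  imports Complex_Main
begin

text \<open>Concrete model: parties 0..m-1, party i has Hilbert space C^(d i).
  The computational basis of H = H_0 (x) ... (x) H_(m-1) is indexed by multi-indices
  x :: nat => nat with x i < d i for i < m and x i = 0 for i >= m.
  Vectors of H are functions from multi-indices to complex numbers (only values on
  the index set matter); operators are kernels (matrices) on the index set.\<close>

definition idx :: "(nat \<Rightarrow> nat) \<Rightarrow> nat \<Rightarrow> (nat \<Rightarrow> nat) set" where
  "idx d m = {x. (\<forall>i<m. x i < d i) \<and> (\<forall>i. m \<le> i \<longrightarrow> x i = 0)}"

type_synonym vec = "(nat \<Rightarrow> nat) \<Rightarrow> complex"
type_synonym op = "(nat \<Rightarrow> nat) \<Rightarrow> (nat \<Rightarrow> nat) \<Rightarrow> complex"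

definition total_dim :: "(nat \<Rightarrow> nat) \<Rightarrow> nat \<Rightarrow> nat" where
  "total_dim d m = card (idx d m)"

definition inner :: "(nat \<Rightarrow> nat) \<Rightarrow> nat \<Rightarrow> vec \<Rightarrow> vec \<Rightarrow> complex" where
  "inner d m u v = (\<Sum>x\<in>idx d m. cnj (u x) * v x)"

definition nonzero_vec :: "(nat \<Rightarrow> nat) \<Rightarrow> nat \<Rightarrow> vec \<Rightarrow> bool" where
  "nonzero_vec d m v \<longleftrightarrow> (\<exists>x\<in>idx d m. v x \<noteq> 0)"

definition product_state :: "(nat \<Rightarrow> nat) \<Rightarrow> nat \<Rightarrow> vec \<Rightarrow> bool" where
  "product_state d m v \<longleftrightarrow>
     (\<exists>\<phi> :: nat \<Rightarrow> nat \<Rightarrow> complex.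
        (\<forall>i<m. \<exists>a<d i. \<phi> i a \<noteq> 0) \<and>
        (\<forall>x\<in>idx d m. v x = (\<Prod>i<m. \<phi> i (x i))))"

definition in_span :: "(nat \<Rightarrow> nat) \<Rightarrow> nat \<Rightarrow> nat \<Rightarrow> (nat \<Rightarrow> vec) \<Rightarrow> vec \<Rightarrow> bool" where
  "in_span d m n \<psi> v \<longleftrightarrow> (\<exists>c :: nat \<Rightarrow> complex. \<forall>x\<in>idx d m. v x = (\<Sum>j<n. c j * \<psi> j x))"

definition product_basis :: "(nat \<Rightarrow> nat) \<Rightarrow> nat \<Rightarrow> nat \<Rightarrow> (nat \<Rightarrow> vec) \<Rightarrow> bool" where
  "product_basis d m n \<psi> \<longleftrightarrow>
     (\<forall>j<n. product_state d m (\<psi> j)) \<and>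
     (\<forall>j<n. \<forall>k<n. j \<noteq> k \<longrightarrow> inner d m (\<psi> j) (\<psi> k) = 0) \<and>
     (\<exists>v. \<not> in_span d m n \<psi> v)"

definition UPB :: "(nat \<Rightarrow> nat) \<Rightarrow> nat \<Rightarrow> nat \<Rightarrow> (nat \<Rightarrow> vec) \<Rightarrow> bool" where
  "UPB d m n \<psi> \<longleftrightarrow> product_basis d m n \<psi> \<and>
     \<not> (\<exists>v. product_state d m v \<and> (\<forall>j<n. inner d m (\<psi> j) v = 0))"

definition psd :: "(nat \<Rightarrow> nat) \<Rightarrow> nat \<Rightarrow> op \<Rightarrow> bool" where
  "psd d m M \<longleftrightarrow> (\<forall>v :: vec.
     let q = (\<Sum>x\<in>idx d m. \<Sum>y\<in>idx d m. cnj (v x) * M x y * v y) in Im q = 0 \<and> Re q \<ge> 0)"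

definition trace :: "(nat \<Rightarrow> nat) \<Rightarrow> nat \<Rightarrow> op \<Rightarrow> complex" where
  "trace d m M = (\<Sum>x\<in>idx d m. M x x)"

definition density_matrix :: "(nat \<Rightarrow> nat) \<Rightarrow> nat \<Rightarrow> op \<Rightarrow> bool" where
  "density_matrix d m \<rho> \<longleftrightarrow> psd d m \<rho> \<and> trace d m \<rho> = 1"

definition separable :: "(nat \<Rightarrow> nat) \<Rightarrow> nat \<Rightarrow> op \<Rightarrow> bool" where
  "separable d m \<rho> \<longleftrightarrow>
     (\<exists>(k::nat) (p :: nat \<Rightarrow> real) (\<phi> :: nat \<Rightarrow> vec).
        (\<forall>l<k. p l \<ge> 0 \<and> product_state d m (\<phi> l) \<and> inner d m (\<phi> l) (\<phi> l) = 1) \<and>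
        (\<Sum>l<k. p l) = 1 \<and>
        (\<forall>x\<in>idx d m. \<forall>y\<in>idx d m. \<rho> x y = (\<Sum>l<k. complex_of_real (p l) * \<phi> l x * cnj (\<phi> l y))))"

definition entangled :: "(nat \<Rightarrow> nat) \<Rightarrow> nat \<Rightarrow> op \<Rightarrow> bool" where
  "entangled d m \<rho> \<longleftrightarrow> density_matrix d m \<rho> \<and> \<not> separable d m \<rho>"

text \<open>Partial transpose w.r.t. the bipartition A | B (B = parties not in A):
  the transpose is applied to the B factor.\<close>
definition mix :: "nat set \<Rightarrow> (nat \<Rightarrow> nat) \<Rightarrow> (nat \<Rightarrow> nat) \<Rightarrow> (nat \<Rightarrow> nat)" where
  "mix A x y = (\<lambda>i. if i \<in> A then x i else y i)"

definition partial_transpose :: "nat set \<Rightarrow> op \<Rightarrow> op" where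
  "partial_transpose A \<rho> = (\<lambda>x y. \<rho> (mix A x y) (mix A y x))"

definition PPT_all_bipartitions :: "(nat \<Rightarrow> nat) \<Rightarrow> nat \<Rightarrow> op \<Rightarrow> bool" where
  "PPT_all_bipartitions d m \<rho> \<longleftrightarrow>
     (\<forall>A. A \<noteq> {} \<and> A \<subset> {..<m} \<longrightarrow> psd d m (partial_transpose A \<rho>))"

definition upb_state :: "(nat \<Rightarrow> nat) \<Rightarrow> nat \<Rightarrow> nat \<Rightarrow> (nat \<Rightarrow> vec) \<Rightarrow> op" where
  "upb_state d m n \<psi> = (\<lambda>x y. ((if x = y then 1 else 0) - (\<Sum>j<n. \<psi> j x * cnj (\<psi> j y)))
                              / of_nat (total_dim d m - n))"

end

theory Submission
  imports Defs
begin

lemma idx_Suc: "idx d (Suc m) = (\<lambda>(x,a). x(m:=a)) ` (idx d m \<times> {..<d m})"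
proof
  show "idx d (Suc m) \<subseteq> (\<lambda>(x,a). x(m:=a)) ` (idx d m \<times> {..<d m})"
  proof
    fix y assume y: "y \<in> idx d (Suc m)"
    have "y = (\<lambda>(x,a). x(m:=a)) (y(m:=0), y m)" by auto
    moreover have "(y(m:=0), y m) \<in> idx d m \<times> {..<d m}"
      using y by (auto simp: idx_def)
    ultimately show "y \<in> (\<lambda>(x,a). x(m:=a)) ` (idx d m \<times> {..<d m})" by blast
  qed
  show "(\<lambda>(x,a). x(m:=a)) ` (idx d m \<times> {..<d m}) \<subseteq> idx d (Suc m)"
    by (auto simp: idx_def less_Suc_eq)
qed

lemma idx_Suc_inj: "inj_on (\<lambda>(x,a). x(m:=a)) (idx d m \<times> {..<d m})"
proof (rule inj_onI, clarsimp)
  fix x a x' a' assume "x \<in> idx d m" "x' \<in> idx d m" "x(m := a) = x'(m := a')"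
  then show "x = x' \<and> a = a'"
  proof -
    assume h: "x \<in> idx d m" "x' \<in> idx d m" "x(m := a) = x'(m := a')"
    have "a = a'" using fun_cong[OF h(3), of m] by simp
    moreover have "x i = x' i" for i
    proof (cases "i = m")
      case True then show ?thesis using h(1,2) by (simp add: idx_def)
    next
      case False then show ?thesis using fun_cong[OF h(3), of i] by simp
    qed
    ultimately show ?thesis by auto
  qed
qed

lemma finite_idx: "finite (idx d m)"
proof (induction m)
  case 0
  have "idx d 0 = {(\<lambda>i. 0)}" by (auto simp: idx_def)
  then show ?case by simp
next
  case (Suc m)
  then show ?case by (simp add: idx_Suc)
qed

lemma sum_prod_idx:
  fixes f :: "nat \<Rightarrow> nat \<Rightarrow> 'a::comm_semiring_1"
  shows "(\<Sum>x\<in>idx d m. \<Prod>i<m. f i (x i)) = (\<Prod>i<m. \<Sum>a<d i. f i a)"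
proof (induction m)
  case 0
  have "idx d 0 = {(\<lambda>i. 0)}" by (auto simp: idx_def)
  then show ?case by simp
next
  case (Suc m)
  have eq: "(\<Prod>i<Suc m. f i ((x(m:=a)) i)) = (\<Prod>i<m. f i (x i)) * f m a" for x a
  proof -
    have "(\<Prod>i<m. f i ((x(m:=a)) i)) = (\<Prod>i<m. f i (x i))"
      by (rule prod.cong) auto
    then show ?thesis by (simp only: prod.lessThan_Suc fun_upd_same)
  qed
  have "(\<Sum>y\<in>idx d (Suc m). \<Prod>i<Suc m. f i (y i))
      = (\<Sum>p\<in>idx d m \<times> {..<d m}. \<Prod>i<Suc m. f i (((\<lambda>(x,a). x(m:=a)) p) i))"
    unfolding idx_Suc by (rule sum.reindex[OF idx_Suc_inj, unfolded comp_def])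
  also have "\<dots> = (\<Sum>(x,a)\<in>idx d m \<times> {..<d m}. (\<Prod>i<m. f i (x i)) * f m a)"
    by (intro sum.cong refl) (auto simp: eq)
  also have "\<dots> = (\<Sum>x\<in>idx d m. \<Sum>a<d m. (\<Prod>i<m. f i (x i)) * f m a)"
    by (rule sum.cartesian_product[symmetric])
  also have "\<dots> = (\<Sum>x\<in>idx d m. \<Prod>i<m. f i (x i)) * (\<Sum>a<d m. f m a)"
    by (rule sum_product[symmetric])
  also have "\<dots> = (\<Prod>i<Suc m. \<Sum>a<d i. f i a)"
    by (simp only: Suc.IH prod.lessThan_Suc)
  finally show ?case .
qed

lemma inner_cnj: "cnj (inner d m u v) = inner d m v u"
  unfolding inner_def by (simp add: mult.commute)

lemma inner_sum_right:
  "inner d m u (\<lambda>x. \<Sum>j<n. c j * w j x) = (\<Sum>j<n. c j * inner d m u (w j))"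
proof -
  have "inner d m u (\<lambda>x. \<Sum>j<n. c j * w j x) = (\<Sum>x\<in>idx d m. \<Sum>j<n. c j * (cnj (u x) * w j x))"
    unfolding inner_def sum_distrib_left by (simp add: mult.left_commute)
  also have "\<dots> = (\<Sum>j<n. \<Sum>x\<in>idx d m. c j * (cnj (u x) * w j x))"
    by (rule sum.swap)
  also have "\<dots> = (\<Sum>j<n. c j * inner d m u (w j))"
    unfolding inner_def sum_distrib_left ..
  finally show ?thesis .
qed

lemma inner_sum_left:
  "inner d m (\<lambda>x. \<Sum>j<n. c j * w j x) u = (\<Sum>j<n. cnj (c j) * inner d m (w j) u)"
proof -
  have "inner d m (\<lambda>x. \<Sum>j<n. c j * w j x) u = cnj (inner d m u (\<lambda>x. \<Sum>j<n. c j * w j x))"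
    by (simp add: inner_cnj)
  also have "\<dots> = (\<Sum>j<n. cnj (c j) * inner d m (w j) u)"
    by (simp add: inner_sum_right inner_cnj)
  finally show ?thesis .
qed

lemma inner_diff_right: "inner d m u (\<lambda>x. v x - w x) = inner d m u v - inner d m u w"
  unfolding inner_def by (simp add: algebra_simps sum_subtractf)

lemma inner_diff_left: "inner d m (\<lambda>x. v x - w x) u = inner d m v u - inner d m w u"
  unfolding inner_def by (simp add: algebra_simps sum_subtractf)

lemma inner_self: "inner d m w w = of_real (\<Sum>x\<in>idx d m. (cmod (w x))^2)"
  unfolding inner_def of_real_sum
proof (rule sum.cong[OF refl])
  fix x show "cnj (w x) * w x = complex_of_real ((cmod (w x))\<^sup>2)"
    by (subst complex_norm_square) (rule mult.commute)
qed

lemma bessel: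
  fixes \<psi> :: "nat \<Rightarrow> vec" and n :: nat
  assumes on: "\<forall>j<n. \<forall>k<n. inner d m (\<psi> j) (\<psi> k) = (if j = k then 1 else 0)"
  shows "inner d m v v - (\<Sum>j<n. cnj (inner d m (\<psi> j) v) * inner d m (\<psi> j) v)
       = inner d m (\<lambda>x. v x - (\<Sum>j<n. inner d m (\<psi> j) v * \<psi> j x))
                   (\<lambda>x. v x - (\<Sum>j<n. inner d m (\<psi> j) v * \<psi> j x))"
proof -
  define a where "a j = inner d m (\<psi> j) v" for j
  define P where "P = (\<lambda>x. \<Sum>j<n. a j * \<psi> j x)"
  have h1: "inner d m v P = (\<Sum>j<n. cnj (a j) * a j)"
    unfolding P_def inner_sum_right
  proof (intro sum.cong refl)
    fix j
    have "inner d m v (\<psi> j) = cnj (a j)" by (simp add: a_def inner_cnj)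
    then show "a j * inner d m v (\<psi> j) = cnj (a j) * a j" by simp
  qed
  have h2: "inner d m P v = (\<Sum>j<n. cnj (a j) * a j)"
    unfolding P_def inner_sum_left a_def ..
  have h3: "inner d m P P = (\<Sum>j<n. cnj (a j) * a j)"
  proof -
    have "inner d m P P = (\<Sum>j<n. cnj (a j) * inner d m (\<psi> j) P)"
      unfolding P_def inner_sum_left ..
    also have "\<dots> = (\<Sum>j<n. cnj (a j) * (\<Sum>k<n. a k * inner d m (\<psi> j) (\<psi> k)))"
      unfolding P_def inner_sum_right ..
    also have "\<dots> = (\<Sum>j<n. cnj (a j) * a j)"
    proof (intro sum.cong refl)
      fix j assume j: "j \<in> {..<n}"
      have "(\<Sum>k<n. a k * inner d m (\<psi> j) (\<psi> k)) = (\<Sum>k<n. if k = j then a k else 0)"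
        using j on by (intro sum.cong refl) auto
      also have "\<dots> = a j" using j by (simp add: sum.delta[OF finite_lessThan])
      finally show "cnj (a j) * (\<Sum>k<n. a k * inner d m (\<psi> j) (\<psi> k)) = cnj (a j) * a j" by simp
    qed
    finally show ?thesis .
  qed
  have "inner d m (\<lambda>x. v x - P x) (\<lambda>x. v x - P x) = inner d m v v - inner d m v P - (inner d m P v - inner d m P P)"
    by (simp only: inner_diff_left inner_diff_right)
  also have "\<dots> = inner d m v v - (\<Sum>j<n. cnj (a j) * a j)"
    using h1 h2 h3 by simp
  finally show ?thesis unfolding P_def a_def by (rule sym)
qed



lemma quad_Q:
  fixes \<psi> :: "nat \<Rightarrow> vec" and n :: nat
  shows "(\<Sum>x\<in>idx d m. \<Sum>y\<in>idx d m. cnj (v x) * (\<Sum>j<n. \<psi> j x * cnj (\<psi> j y)) * v y)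
       = (\<Sum>j<n. cnj (inner d m (\<psi> j) v) * inner d m (\<psi> j) v)"
proof -
  have "(\<Sum>j<n. cnj (inner d m (\<psi> j) v) * inner d m (\<psi> j) v)
      = (\<Sum>j<n. (\<Sum>x\<in>idx d m. cnj (v x) * \<psi> j x) * (\<Sum>y\<in>idx d m. cnj (\<psi> j y) * v y))"
    by (simp add: inner_cnj) (simp add: inner_def)
  also have "\<dots> = (\<Sum>j<n. \<Sum>x\<in>idx d m. \<Sum>y\<in>idx d m. cnj (v x) * \<psi> j x * (cnj (\<psi> j y) * v y))"
    by (simp only: sum_product)
  also have "\<dots> = (\<Sum>x\<in>idx d m. \<Sum>j<n. \<Sum>y\<in>idx d m. cnj (v x) * \<psi> j x * (cnj (\<psi> j y) * v y))"
    by (rule sum.swap)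
  also have "\<dots> = (\<Sum>x\<in>idx d m. \<Sum>y\<in>idx d m. \<Sum>j<n. cnj (v x) * \<psi> j x * (cnj (\<psi> j y) * v y))"
    by (intro sum.cong refl) (rule sum.swap)
  also have "\<dots> = (\<Sum>x\<in>idx d m. \<Sum>y\<in>idx d m. cnj (v x) * (\<Sum>j<n. \<psi> j x * cnj (\<psi> j y)) * v y)"
    by (intro sum.cong refl) (simp add: sum_distrib_left sum_distrib_right mult.assoc)
  finally show ?thesis by (rule sym)
qed

lemma quad_upb:
  fixes \<psi> :: "nat \<Rightarrow> vec" and n :: nat
  shows "(\<Sum>x\<in>idx d m. \<Sum>y\<in>idx d m. cnj (v x) * upb_state d m n \<psi> x y * v y)
       = (inner d m v v - (\<Sum>j<n. cnj (inner d m (\<psi> j) v) * inner d m (\<psi> j) v)) / of_nat (total_dim d m - n)"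
proof -
  define c :: complex where "c = of_nat (total_dim d m - n)"
  have "(\<Sum>x\<in>idx d m. \<Sum>y\<in>idx d m. cnj (v x) * upb_state d m n \<psi> x y * v y)
      = (\<Sum>x\<in>idx d m. \<Sum>y\<in>idx d m. (cnj (v x) * (if x = y then 1 else 0) * v y
            - cnj (v x) * (\<Sum>j<n. \<psi> j x * cnj (\<psi> j y)) * v y) / c)"
    unfolding upb_state_def c_def by (intro sum.cong refl) (simp add: algebra_simps diff_divide_distrib)
  also have "\<dots> = ((\<Sum>x\<in>idx d m. \<Sum>y\<in>idx d m. cnj (v x) * (if x = y then 1 else 0) * v y)
            - (\<Sum>x\<in>idx d m. \<Sum>y\<in>idx d m. cnj (v x) * (\<Sum>j<n. \<psi> j x * cnj (\<psi> j y)) * v y)) / c"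
    by (simp add: sum_subtractf diff_divide_distrib sum_divide_distrib)
  also have "(\<Sum>x\<in>idx d m. \<Sum>y\<in>idx d m. cnj (v x) * (if x = y then 1 else 0) * v y) = inner d m v v"
    unfolding inner_def
  proof (intro sum.cong refl)
    fix x assume x: "x \<in> idx d m"
    have "(\<Sum>y\<in>idx d m. cnj (v x) * (if x = y then 1 else 0) * v y)
        = (\<Sum>y\<in>idx d m. if x = y then cnj (v x) * v y else 0)"
      by (intro sum.cong refl) simp
    also have "\<dots> = cnj (v x) * v x" using x by (simp add: finite_idx)
    finally show "(\<Sum>y\<in>idx d m. cnj (v x) * (if x = y then 1 else 0) * v y) = cnj (v x) * v x" .
  qed
  finally show ?thesis unfolding quad_Q c_def .
qed


definition ortho :: "(nat \<Rightarrow> nat) \<Rightarrow> nat \<Rightarrow> nat \<Rightarrow> (nat \<Rightarrow> vec) \<Rightarrow> bool" where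
  "ortho d m n \<psi> \<longleftrightarrow> (\<forall>j<n. \<forall>k<n. inner d m (\<psi> j) (\<psi> k) = (if j = k then 1 else 0))"

lemma psd_upb:
  fixes \<psi> :: "nat \<Rightarrow> vec" and n :: nat
  assumes "ortho d m n \<psi>"
  shows "psd d m (upb_state d m n \<psi>)"
  unfolding psd_def Let_def
proof
  fix v :: vec
  define W where "W = (\<lambda>x. v x - (\<Sum>j<n. inner d m (\<psi> j) v * \<psi> j x))"
  have "(\<Sum>x\<in>idx d m. \<Sum>y\<in>idx d m. cnj (v x) * upb_state d m n \<psi> x y * v y)
      = inner d m W W / of_nat (total_dim d m - n)"
    unfolding quad_upb W_def using bessel[of n d m \<psi> v] assms by (simp add: ortho_def)
  also have "\<dots> = of_real ((\<Sum>x\<in>idx d m. (cmod (W x))^2) / real (total_dim d m - n))"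
    unfolding inner_self by simp
  finally have eq: "(\<Sum>x\<in>idx d m. \<Sum>y\<in>idx d m. cnj (v x) * upb_state d m n \<psi> x y * v y)
      = of_real ((\<Sum>x\<in>idx d m. (cmod (W x))^2) / real (total_dim d m - n))" .
  have "0 \<le> (\<Sum>x\<in>idx d m. (cmod (W x))^2) / real (total_dim d m - n)"
    by (intro divide_nonneg_nonneg sum_nonneg) auto
  then show "Im (\<Sum>x\<in>idx d m. \<Sum>y\<in>idx d m. cnj (v x) * upb_state d m n \<psi> x y * v y) = 0 \<and>
          0 \<le> Re (\<Sum>x\<in>idx d m. \<Sum>y\<in>idx d m. cnj (v x) * upb_state d m n \<psi> x y * v y)"
    unfolding eq by simp
qed


lemma cnj_sq: "cnj (cnj z) * cnj z = complex_of_real ((cmod z)^2)"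
  by (subst complex_norm_square) simp

lemma n_less:
  fixes \<psi> :: "nat \<Rightarrow> vec" and n :: nat
  assumes on: "ortho d m n \<psi>" and nsp: "\<not> in_span d m n \<psi> v"
  shows "n < total_dim d m"
proof (rule ccontr)
  assume "\<not> n < total_dim d m"
  hence ge: "card (idx d m) \<le> n" by (simp add: total_dim_def)
  define r where "r x = (\<Sum>j<n. (cmod (\<psi> j x))^2)" for x
  define e :: "(nat \<Rightarrow> nat) \<Rightarrow> vec" where "e x = (\<lambda>y. if y = x then (1::complex) else 0)" for x
  define W where "W x = (\<lambda>y. e x y - (\<Sum>j<n. inner d m (\<psi> j) (e x) * \<psi> j y))" for x
  have ie: "inner d m (\<psi> j) (e x) = cnj (\<psi> j x)" if "x \<in> idx d m" for j x
    unfolding inner_def e_def using that by (simp add: finite_idx if_distrib cong: if_cong)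
  have iee: "inner d m (e x) (e x) = 1" if "x \<in> idx d m" for x
    unfolding inner_def e_def using that by (simp add: finite_idx if_distrib cong: if_cong)
  have key: "complex_of_real (1 - r x) = complex_of_real (\<Sum>y\<in>idx d m. (cmod (W x y))^2)" if x: "x \<in> idx d m" for x
  proof -
    have "of_real (1 - r x) = inner d m (e x) (e x) - (\<Sum>j<n. cnj (inner d m (\<psi> j) (e x)) * inner d m (\<psi> j) (e x))"
    proof -
      have "(\<Sum>j<n. cnj (inner d m (\<psi> j) (e x)) * inner d m (\<psi> j) (e x)) = of_real (r x)"
        unfolding r_def of_real_sum by (intro sum.cong refl) (simp only: ie[OF x] cnj_sq)
      then show ?thesis using iee[OF x] by simp
    qed
    also have "\<dots> = inner d m (W x) (W x)"
      unfolding W_def by (rule bessel) (use on in \<open>simp add: ortho_def\<close>)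
    finally show ?thesis by (simp only: inner_self)
  qed
  have rle: "r x \<le> 1" and req: "1 - r x = (\<Sum>y\<in>idx d m. (cmod (W x y))^2)" if "x \<in> idx d m" for x
  proof -
    show "1 - r x = (\<Sum>y\<in>idx d m. (cmod (W x y))^2)" using key[OF that] of_real_eq_iff by blast
    then show "r x \<le> 1" using sum_nonneg[of "idx d m" "\<lambda>y. (cmod (W x y))^2"] by simp
  qed
  have norm1: "(\<Sum>x\<in>idx d m. (cmod (\<psi> j x))^2) = 1" if "j < n" for j
  proof -
    have "inner d m (\<psi> j) (\<psi> j) = 1" using on that by (simp add: ortho_def)
    then show ?thesis unfolding inner_self by (metis of_real_eq_1_iff)
  qed
  have "(\<Sum>x\<in>idx d m. r x) = (\<Sum>j<n. \<Sum>x\<in>idx d m. (cmod (\<psi> j x))^2)"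
    unfolding r_def by (rule sum.swap)
  also have "\<dots> = real n" using norm1 by simp
  finally have sr: "(\<Sum>x\<in>idx d m. r x) = real n" .
  have "(\<Sum>x\<in>idx d m. 1 - r x) = real (card (idx d m)) - real n"
    by (simp add: sum_subtractf sr)
  hence "(\<Sum>x\<in>idx d m. 1 - r x) \<le> 0" using ge by simp
  moreover have "\<forall>x\<in>idx d m. 0 \<le> 1 - r x" using rle by simp
  ultimately have "\<forall>x\<in>idx d m. 1 - r x = 0"
    using finite_idx sum_nonneg_eq_0_iff[of "idx d m" "\<lambda>x. 1 - r x"] sum_nonneg[of "idx d m" "\<lambda>x. 1 - r x"]
    by (metis order_antisym)
  hence W0: "W x y = 0" if "x \<in> idx d m" "y \<in> idx d m" for x y
    using req that finite_idx sum_nonneg_eq_0_iff[of "idx d m" "\<lambda>y. (cmod (W x y))^2"] by fastforce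
  have eexp: "e x y = (\<Sum>j<n. cnj (\<psi> j x) * \<psi> j y)" if "x \<in> idx d m" "y \<in> idx d m" for x y
    using W0[OF that] that unfolding W_def by (simp add: ie)
  have "in_span d m n \<psi> v"
    unfolding in_span_def
  proof (intro exI ballI)
    fix y assume y: "y \<in> idx d m"
    have "v y = (\<Sum>x\<in>idx d m. v x * e x y)"
      unfolding e_def using y by (simp add: finite_idx if_distrib cong: if_cong)
    also have "\<dots> = (\<Sum>x\<in>idx d m. v x * (\<Sum>j<n. cnj (\<psi> j x) * \<psi> j y))"
      using y by (intro sum.cong refl) (simp add: eexp)
    also have "\<dots> = (\<Sum>j<n. (\<Sum>x\<in>idx d m. v x * cnj (\<psi> j x)) * \<psi> j y)"
      by (simp add: sum_distrib_left sum_distrib_right mult.assoc) (rule sum.swap)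
    finally show "v y = (\<Sum>j<n. (\<lambda>j. \<Sum>x\<in>idx d m. v x * cnj (\<psi> j x)) j * \<psi> j y)" by simp
  qed
  with nsp show False by simp
qed


lemma trace_upb:
  fixes \<psi> :: "nat \<Rightarrow> vec" and n :: nat
  assumes on: "ortho d m n \<psi>" and lt: "n < total_dim d m"
  shows "trace d m (upb_state d m n \<psi>) = 1"
proof -
  define c :: complex where "c = of_nat (total_dim d m - n)"
  have c0: "c \<noteq> 0" using lt by (simp add: c_def)
  have "(\<Sum>x\<in>idx d m. \<Sum>j<n. \<psi> j x * cnj (\<psi> j x)) = (\<Sum>j<n. inner d m (\<psi> j) (\<psi> j))"
    unfolding inner_def by (subst sum.swap) (simp add: mult.commute)
  also have "\<dots> = of_nat n" using on by (simp add: ortho_def)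
  finally have s1: "(\<Sum>x\<in>idx d m. \<Sum>j<n. \<psi> j x * cnj (\<psi> j x)) = of_nat n" .
  have "trace d m (upb_state d m n \<psi>) = (\<Sum>x\<in>idx d m. (1 - (\<Sum>j<n. \<psi> j x * cnj (\<psi> j x))) / c)"
    unfolding trace_def upb_state_def c_def by simp
  also have "\<dots> = (of_nat (total_dim d m) - of_nat n) / c"
    by (simp add: sum_divide_distrib[symmetric] sum_subtractf s1 total_dim_def)
  also have "\<dots> = c / c" using lt by (simp add: c_def of_nat_diff)
  finally show ?thesis using c0 by simp
qed

lemma cnj_mult_self: "cnj a * a = complex_of_real ((cmod a)^2)"
  by (subst complex_norm_square) (simp add: mult.commute)

lemma not_sep:
  fixes \<psi> :: "nat \<Rightarrow> vec" and n :: nat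
  assumes upb: "UPB d m n \<psi>" and on: "ortho d m n \<psi>"
  shows "\<not> separable d m (upb_state d m n \<psi>)"
proof
  assume "separable d m (upb_state d m n \<psi>)"
  then obtain k :: nat and p :: "nat \<Rightarrow> real" and \<phi> :: "nat \<Rightarrow> vec" where hp: "\<forall>l<k. p l \<ge> 0 \<and> product_state d m (\<phi> l) \<and> inner d m (\<phi> l) (\<phi> l) = 1"
    and sp: "(\<Sum>l<k. p l) = 1"
    and rho: "\<forall>x\<in>idx d m. \<forall>y\<in>idx d m. upb_state d m n \<psi> x y = (\<Sum>l<k. complex_of_real (p l) * \<phi> l x * cnj (\<phi> l y))"
    unfolding separable_def by blast
  define \<phi>' :: "nat \<Rightarrow> vec" where "\<phi>' l = (\<lambda>x. complex_of_real (sqrt (p l)) * \<phi> l x)" for l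
  have phi'_prod: "complex_of_real (p l) * \<phi> l x * cnj (\<phi> l y) = \<phi>' l x * cnj (\<phi>' l y)" if "l < k" for l x y
  proof -
    have "complex_of_real (p l) = complex_of_real (sqrt (p l)) * complex_of_real (sqrt (p l))"
      using hp that by (simp flip: of_real_mult)
    then show ?thesis unfolding \<phi>'_def by simp
  qed
  obtain l0 where l0: "l0 < k" "p l0 > 0"
  proof (rule ccontr)
    assume "\<not> thesis"
    with that have "\<forall>l<k. p l = 0" using hp by force
    with sp show False by simp
  qed
  have orth: "inner d m (\<psi> j) (\<phi> l0) = 0" if j: "j < n" for j
  proof -
    have "(\<Sum>x\<in>idx d m. \<Sum>y\<in>idx d m. cnj (\<psi> j x) * upb_state d m n \<psi> x y * \<psi> j y)
        = (inner d m (\<psi> j) (\<psi> j) - (\<Sum>i<n. cnj (inner d m (\<psi> i) (\<psi> j)) * inner d m (\<psi> i) (\<psi> j))) / of_nat (total_dim d m - n)"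
      by (rule quad_upb)
    also have "(\<Sum>i<n. cnj (inner d m (\<psi> i) (\<psi> j)) * inner d m (\<psi> i) (\<psi> j)) = (\<Sum>i<n. if i = j then 1 else 0)"
      using on j by (intro sum.cong refl) (simp add: ortho_def)
    also have "\<dots> = 1" using j by simp
    finally have z1: "(\<Sum>x\<in>idx d m. \<Sum>y\<in>idx d m. cnj (\<psi> j x) * upb_state d m n \<psi> x y * \<psi> j y) = 0"
      using on j by (simp add: ortho_def)
    have "(\<Sum>x\<in>idx d m. \<Sum>y\<in>idx d m. cnj (\<psi> j x) * upb_state d m n \<psi> x y * \<psi> j y)
        = (\<Sum>x\<in>idx d m. \<Sum>y\<in>idx d m. cnj (\<psi> j x) * (\<Sum>l<k. \<phi>' l x * cnj (\<phi>' l y)) * \<psi> j y)"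
      using rho phi'_prod by (intro sum.cong refl) simp
    also have "\<dots> = (\<Sum>l<k. cnj (inner d m (\<phi>' l) (\<psi> j)) * inner d m (\<phi>' l) (\<psi> j))"
      by (rule quad_Q)
    also have "\<dots> = complex_of_real (\<Sum>l<k. (cmod (inner d m (\<phi>' l) (\<psi> j)))^2)"
      by (simp only: cnj_mult_self of_real_sum)
    finally have h: "(\<Sum>x\<in>idx d m. \<Sum>y\<in>idx d m. cnj (\<psi> j x) * upb_state d m n \<psi> x y * \<psi> j y)
        = complex_of_real (\<Sum>l<k. (cmod (inner d m (\<phi>' l) (\<psi> j)))^2)" .
    have "complex_of_real (\<Sum>l<k. (cmod (inner d m (\<phi>' l) (\<psi> j)))^2) = 0"
      using h z1 by argo
    hence "(\<Sum>l<k. (cmod (inner d m (\<phi>' l) (\<psi> j)))^2) = 0" by (simp only: of_real_eq_0_iff)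
    hence "(cmod (inner d m (\<phi>' l0) (\<psi> j)))^2 = 0"
      using l0 sum_nonneg_eq_0_iff[of "{..<k}" "\<lambda>l. (cmod (inner d m (\<phi>' l) (\<psi> j)))^2"] by simp
    hence "inner d m (\<phi>' l0) (\<psi> j) = 0" by simp
    moreover have "inner d m (\<phi>' l0) (\<psi> j) = complex_of_real (sqrt (p l0)) * inner d m (\<phi> l0) (\<psi> j)"
      unfolding \<phi>'_def inner_def by (simp add: sum_distrib_left mult.assoc)
    ultimately have "inner d m (\<phi> l0) (\<psi> j) = 0" using l0 by simp
    then show ?thesis by (metis inner_cnj complex_cnj_zero)
  qed
  have "product_state d m (\<phi> l0)" using hp l0 by blast
  with orth upb show False unfolding UPB_def by blast
qed


lemma psd_cong:
  assumes "\<forall>x\<in>idx d m. \<forall>y\<in>idx d m. M x y = N x y"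
  shows "psd d m M = psd d m N"
proof -
  have "(\<Sum>x\<in>idx d m. \<Sum>y\<in>idx d m. cnj (v x) * M x y * v y)
      = (\<Sum>x\<in>idx d m. \<Sum>y\<in>idx d m. cnj (v x) * N x y * v y)" for v :: vec
    using assms by (intro sum.cong refl) simp
  then show ?thesis unfolding psd_def by simp
qed

lemma mix_eq: "mix A x y = mix A y x \<longleftrightarrow> x = y"
proof
  assume h: "mix A x y = mix A y x"
  show "x = y"
  proof
    fix i show "x i = y i" using fun_cong[OF h, of i] by (simp add: mix_def split: if_splits)
  qed
qed (simp add: mix_def)

lemma mix_idx: "x \<in> idx d m \<Longrightarrow> y \<in> idx d m \<Longrightarrow> mix A x y \<in> idx d m"
  by (auto simp: idx_def mix_def)

lemma prod_cnj_distrib: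
  fixes f h :: "nat \<Rightarrow> complex"
  shows "(\<Prod>i<m. f i) * cnj (\<Prod>i<m. h i) = (\<Prod>i<m. f i * cnj (h i))"
  by (simp add: prod.distrib)

lemma ppt:
  fixes \<psi> :: "nat \<Rightarrow> vec" and n :: nat
  assumes pb: "\<forall>j<n. product_state d m (\<psi> j)" and on: "ortho d m n \<psi>"
  shows "psd d m (partial_transpose A (upb_state d m n \<psi>))"
proof -
  have "\<forall>j. \<exists>\<phi>. j < n \<longrightarrow> (\<forall>x\<in>idx d m. \<psi> j x = (\<Prod>i<m. \<phi> i (x i)))"
    using pb unfolding product_state_def by blast
  from choice[OF this] obtain \<Phi> :: "nat \<Rightarrow> nat \<Rightarrow> nat \<Rightarrow> complex"
    where \<Phi>: "\<And>j x. j < n \<Longrightarrow> x \<in> idx d m \<Longrightarrow> \<psi> j x = (\<Prod>i<m. \<Phi> j i (x i))" by blast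
  define g where "g j i a = (if i \<in> A then \<Phi> j i a else cnj (\<Phi> j i a))" for j i a
  define \<psi>' :: "nat \<Rightarrow> vec" where "\<psi>' j x = (\<Prod>i<m. g j i (x i))" for j x
  have trm: "\<psi> j (mix A x y) * cnj (\<psi> j (mix A y x)) = \<psi>' j x * cnj (\<psi>' j y)"
    if j: "j < n" and x: "x \<in> idx d m" and y: "y \<in> idx d m" for j x y
  proof -
    have "\<psi> j (mix A x y) * cnj (\<psi> j (mix A y x))
        = (\<Prod>i<m. \<Phi> j i (mix A x y i)) * cnj (\<Prod>i<m. \<Phi> j i (mix A y x i))"
      using \<Phi>[OF j mix_idx[OF x y]] \<Phi>[OF j mix_idx[OF y x]] by simp
    also have "\<dots> = (\<Prod>i<m. \<Phi> j i (mix A x y i) * cnj (\<Phi> j i (mix A y x i)))"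
      by (rule prod_cnj_distrib)
    also have "\<dots> = (\<Prod>i<m. g j i (x i) * cnj (g j i (y i)))"
      by (intro prod.cong refl) (simp add: g_def mix_def)
    also have "\<dots> = \<psi>' j x * cnj (\<psi>' j y)"
      unfolding \<psi>'_def by (rule prod_cnj_distrib[symmetric])
    finally show ?thesis .
  qed
  have eqM: "\<forall>x\<in>idx d m. \<forall>y\<in>idx d m. partial_transpose A (upb_state d m n \<psi>) x y = upb_state d m n \<psi>' x y"
  proof (intro ballI)
    fix x y assume x: "x \<in> idx d m" and y: "y \<in> idx d m"
    have "(\<Sum>j<n. \<psi> j (mix A x y) * cnj (\<psi> j (mix A y x))) = (\<Sum>j<n. \<psi>' j x * cnj (\<psi>' j y))"
      using trm x y by (intro sum.cong refl) simp
    then show "partial_transpose A (upb_state d m n \<psi>) x y = upb_state d m n \<psi>' x y"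
      unfolding partial_transpose_def upb_state_def mix_eq by simp
  qed
  define C where "C j k i = (\<Sum>a<d i. cnj (\<Phi> j i a) * \<Phi> k i a)" for j k i
  have inner_psi: "inner d m (\<psi> j) (\<psi> k) = (\<Prod>i<m. C j k i)" if "j < n" "k < n" for j k
  proof -
    have "inner d m (\<psi> j) (\<psi> k) = (\<Sum>x\<in>idx d m. \<Prod>i<m. cnj (\<Phi> j i (x i)) * \<Phi> k i (x i))"
      unfolding inner_def using \<Phi> that by (intro sum.cong refl) (simp add: prod.distrib)
    also have "\<dots> = (\<Prod>i<m. C j k i)" unfolding C_def by (rule sum_prod_idx)
    finally show ?thesis .
  qed
  have inner_psi': "inner d m (\<psi>' j) (\<psi>' k) = (\<Prod>i<m. if i \<in> A then C j k i else cnj (C j k i))" for j k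
  proof -
    have "inner d m (\<psi>' j) (\<psi>' k) = (\<Sum>x\<in>idx d m. \<Prod>i<m. cnj (g j i (x i)) * g k i (x i))"
      unfolding inner_def \<psi>'_def by (intro sum.cong refl) (simp add: prod.distrib)
    also have "\<dots> = (\<Prod>i<m. \<Sum>a<d i. cnj (g j i a) * g k i a)" by (rule sum_prod_idx)
    also have "\<dots> = (\<Prod>i<m. if i \<in> A then C j k i else cnj (C j k i))"
      unfolding C_def g_def by (intro prod.cong refl) (simp add: mult.commute)
    finally show ?thesis .
  qed
  have on': "ortho d m n \<psi>'"
    unfolding ortho_def
  proof (intro allI impI)
    fix j k assume j: "j < n" and k: "k < n"
    show "inner d m (\<psi>' j) (\<psi>' k) = (if j = k then 1 else 0)"
    proof (cases "j = k")
      case True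
      have cc: "cnj (C j j i) = C j j i" for i unfolding C_def by (simp add: mult.commute)
      have "(\<Prod>i<m. if i \<in> A then C j j i else cnj (C j j i)) = (\<Prod>i<m. C j j i)"
        by (rule prod.cong[OF refl]) (metis cc)
      hence "inner d m (\<psi>' j) (\<psi>' j) = inner d m (\<psi> j) (\<psi> j)"
        using inner_psi'[of j j] inner_psi[OF j j] by simp
      then show ?thesis using on j True by (simp add: ortho_def)
    next
      case False
      have "(\<Prod>i<m. C j k i) = 0" using inner_psi[OF j k] on j k False by (simp add: ortho_def)
      then obtain i where i: "i < m" "C j k i = 0" by (auto simp: prod_zero_iff)
      have "(\<Prod>i<m. if i \<in> A then C j k i else cnj (C j k i)) = 0"
        using i by (auto simp: prod_zero_iff intro!: bexI[of _ i])
      then show ?thesis using inner_psi' False by simp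
    qed
  qed
  show ?thesis using psd_cong[OF eqM] psd_upb[OF on'] by simp
qed


theorem theorem1:
  fixes d :: "nat \<Rightarrow> nat" and m n :: nat and \<psi> :: "nat \<Rightarrow> vec"
  assumes "\<forall>i<m. 0 < d i"
    and "UPB d m n \<psi>"
    and "\<forall>j<n. inner d m (\<psi> j) (\<psi> j) = 1"
  shows "entangled d m (upb_state d m n \<psi>) \<and> PPT_all_bipartitions d m (upb_state d m n \<psi>)"
proof -
  have pb: "\<forall>j<n. product_state d m (\<psi> j)"
    and orth: "\<forall>j<n. \<forall>k<n. j \<noteq> k \<longrightarrow> inner d m (\<psi> j) (\<psi> k) = 0"
    and nsp: "\<exists>v. \<not> in_span d m n \<psi> v"
    using assms(2) unfolding UPB_def product_basis_def by blast+
  have on: "ortho d m n \<psi>" unfolding ortho_def using orth assms(3) by auto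
  from nsp obtain v where v: "\<not> in_span d m n \<psi> v" by blast
  have lt: "n < total_dim d m" by (rule n_less[OF on v])
  have "density_matrix d m (upb_state d m n \<psi>)"
    unfolding density_matrix_def using psd_upb[OF on] trace_upb[OF on lt] by simp
  moreover have "\<not> separable d m (upb_state d m n \<psi>)" by (rule not_sep[OF assms(2) on])
  moreover have "PPT_all_bipartitions d m (upb_state d m n \<psi>)"
    unfolding PPT_all_bipartitions_def using ppt[OF pb on] by blast
  ultimately show ?thesis unfolding entangled_def by blast
qed

end
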